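(* Fix reals $a<b$ with $\tau_0\notin[a,b]$, $S=T\cap[a,b]$, $m\ge1$, points $q_1,\ldots,q_r\in\mathbf M$, a subset $\mathbf\Pi\subseteq\mathbf M$ and pairwise disjoint sets $\Pi_1,\ldots,\Pi_d\subseteq\mathbf M$ with $\mathbf\Pi\subseteq\Pi_1\cup\cdots\cup\Pi_d$. Suppose reals $\alpha_{ij}\le\beta_{ij}$ ($1\le i\le r$, $1\le j\le d$) satisfy $\alpha_{ij}\le\tau(q_i,q)\le\beta_{ij}$ for all $q\in\Pi_j$, and reals $a_{ij}\le b_{ij}$ ($1\le i\le j\le d$) satisfy $\tau(u,v)\in[a_{ij},b_{ij}]$ whenever $u\in\Pi_i$, $v\in\Pi_j$, $u\ne v$, $\tau(u,v)\in[a,b]$. Let $\mathcal A$ be any set of constraints satisfied by the tuple $(x_{ij}^{(k)}(C),y_{ij}^{(k)}(C))$ of every $S$-code $C\subset\mathbf\Pi$. Let $c^*$ be the supremum of $c_1+\cdots+c_d$ over real variables $c_j$, $x_{ij}^{(k)}$ ($1\le i\le j\le d$, with $x_{ji}^{(k)}:=x_{ij}^{(k)}$), $y_{ij}^{(k)}$ ($1\le i\le r$, $1\le j\le d$), $k=0,\ldots,2m-1$, subject to: (11) for each $k=0,\ldots,2m-1$ the symmetric $(r+d)\times(r+d)$ matrix $\Gamma_k$ with entries $\Phi_k(\tau(q_i,q_{i'}))$ in position $(i,i')$ ($i,i'\le r$), $\sum_{l=0}^k p_{kl}y_{ij}^{(l)}$ in positions $(i,r+j)$ and $(r+j,i)$,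 and $\sum_{l=0}^k p_{kl}x_{jj'}^{(l)}$ in position $(r+j,r+j')$, is positive semidefinite; (13) $H_m(y_{ij}^{(0)},\ldots,y_{ij}^{(2m-1)},[\alpha_{ij},\beta_{ij}])\succeq0$ for all $i\le r$, $j\le d$; (14) $H_m(x_{ij}^{(0)},\ldots,x_{ij}^{(2m-1)},[a_{ij},b_{ij}])\succeq0$ for $1\le i<j\le d$; (15) $H_m(z_{0,i},\ldots,z_{2m-1,i},[a_{ii},b_{ii}])\succeq0$ for $i=1,\ldots,d$, where $z_{k,i}:=x_{ii}^{(k)}-c_i\tau_0^k$ for $k\ge1$ and $z_{0,i}:=x_{ii}^{(0)}-c_i$; (16) the constraints $\mathcal A$; (17) $y_{ij}^{(0)}=c_j\ge0$ for all $i,j$, and the $(d+1)\times(d+1)$ matrix $\begin{pmatrix}1&c^{T}\\ c&(x_{ij}^{(0)})_{i,j=1}^d\end{pmatrix}$, $c=(c_1,\ldots,c_d)^T$, is positive semidefinite. Then $A(\mathbf\Pi,S)\le c^*$.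
   Context: $\mathbf M$ is a 2-point-homogeneous space with associated real function $\tau(x,y)$, $\tau_0:=\tau(x,x)$, $T=\{\tau(x,y):x,y\in\mathbf M\}$, and zonal spherical functions $\Phi_k(t)=\sum_{l=0}^k p_{kl}t^l$ assumed to be real polynomials of degree $k$ with $\Phi_k(\tau_0)=1$ such that for every finite $\{x_1,\ldots,x_N\}\subset\mathbf M$ and $k\ge0$ the matrix $(\Phi_k(\tau(x_i,x_j)))$ is positive semidefinite. An $S$-code is a finite $C\subset\mathbf M$ with $\tau(x,y)\in S$ for all distinct $x,y\in C$; $A(\mathbf\Pi,S)$ is the largest cardinality of an $S$-code contained in $\mathbf\Pi$. For an $S$-code $C\subset\mathbf\Pi$ and $C_j:=C\cap\Pi_j$: $x_{ij}^{(k)}(C)=\sum_{u\in C_i}\sum_{v\in C_j}\tau(u,v)^k$ (including $u=v$ when $i=j$) and $y_{ij}^{(k)}(C)=\sum_{q\in C_j}\tau(q_i,q)^k$, with $\tau^0:=1$. For reals $s_0,\ldots,s_{2m-1}$ and $\alpha\le\beta$: $R_m=(s_{i+j-2})_{i,j=1}^m$, $F_m^+(\alpha)=(s_{i+j-1}-\alpha s_{i+j-2})$, $F_m^-(\beta)=(\beta s_{i+j-2}-s_{i+j-1})$, $H_m(s_0,\ldots,s_{2m-1},[\alpha,\beta])=\operatorname{diag}(R_m,F_m^+(\alpha),F_m^-(\beta))$. *)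

theory Defs
  imports Complex_Main "HOL-Library.Extended_Real"
begin

definition psd_on :: "nat set \<Rightarrow> (nat \<Rightarrow> nat \<Rightarrow> real) \<Rightarrow> bool" where
  "psd_on I A \<longleftrightarrow> (\<forall>i\<in>I. \<forall>j\<in>I. A i j = A j i) \<and>
     (\<forall>v :: nat \<Rightarrow> real. 0 \<le> (\<Sum>i\<in>I. \<Sum>j\<in>I. v i * A i j * v j))"

definition Phi :: "(nat \<Rightarrow> nat \<Rightarrow> real) \<Rightarrow> nat \<Rightarrow> real \<Rightarrow> real" where
  "Phi p k t = (\<Sum>l\<le>k. p k l * t ^ l)"

text \<open>H_m(s_0,...,s_{2m-1},[alpha,beta]) = diag(R_m, F_m^+(alpha), F_m^-(beta)), a 3m x 3m
  matrix with (0-based) indices 0..3m-1.  With 1-based block indices i,j the entries are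
  s_{i+j-2}, s_{i+j-1} - alpha s_{i+j-2}, beta s_{i+j-2} - s_{i+j-1}; in 0-based indices
  i,j these are s_{i+j}, s_{i+j+1} - alpha s_{i+j}, beta s_{i+j} - s_{i+j+1}.\<close>
definition Hmat :: "nat \<Rightarrow> (nat \<Rightarrow> real) \<Rightarrow> real \<Rightarrow> real \<Rightarrow> nat \<Rightarrow> nat \<Rightarrow> real" where
  "Hmat m s \<alpha> \<beta> i j =
     (if i < m \<and> j < m then s (i + j)
      else if m \<le> i \<and> i < 2*m \<and> m \<le> j \<and> j < 2*m then
        s ((i - m) + (j - m) + 1) - \<alpha> * s ((i - m) + (j - m))
      else if 2*m \<le> i \<and> i < 3*m \<and> 2*m \<le> j \<and> j < 3*m then
        \<beta> * s ((i - 2*m) + (j - 2*m)) - s ((i - 2*m) + (j - 2*m) + 1)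
      else 0)"

definition H_psd :: "nat \<Rightarrow> (nat \<Rightarrow> real) \<Rightarrow> real \<Rightarrow> real \<Rightarrow> bool" where
  "H_psd m s \<alpha> \<beta> \<longleftrightarrow> psd_on {0..<3*m} (Hmat m s \<alpha> \<beta>)"

definition is_Scode :: "('a \<Rightarrow> 'a \<Rightarrow> real) \<Rightarrow> real set \<Rightarrow> 'a set \<Rightarrow> bool" where
  "is_Scode \<tau> S C \<longleftrightarrow> finite C \<and> (\<forall>x\<in>C. \<forall>y\<in>C. x \<noteq> y \<longrightarrow> \<tau> x y \<in> S)"

definition A_code :: "('a \<Rightarrow> 'a \<Rightarrow> real) \<Rightarrow> 'a set \<Rightarrow> real set \<Rightarrow> ereal" where
  "A_code \<tau> P S = Sup {ereal (real (card C)) | C. is_Scode \<tau> S C \<and> C \<subseteq> P}"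

text \<open>x_{ij}^{(k)}(C) and y_{ij}^{(k)}(C), with C_j = C \<inter> Pi_j (note 0^0 = 1).\<close>
definition code_x :: "('a \<Rightarrow> 'a \<Rightarrow> real) \<Rightarrow> (nat \<Rightarrow> 'a set) \<Rightarrow> 'a set \<Rightarrow> nat \<Rightarrow> nat \<Rightarrow> nat \<Rightarrow> real" where
  "code_x \<tau> Pi C k i j = (\<Sum>u\<in>C \<inter> Pi i. \<Sum>v\<in>C \<inter> Pi j. \<tau> u v ^ k)"

definition code_y :: "('a \<Rightarrow> 'a \<Rightarrow> real) \<Rightarrow> (nat \<Rightarrow> 'a set) \<Rightarrow> (nat \<Rightarrow> 'a) \<Rightarrow> 'a set \<Rightarrow> nat \<Rightarrow> nat \<Rightarrow> nat \<Rightarrow> real" where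
  "code_y \<tau> Pi q C k i j = (\<Sum>w\<in>C \<inter> Pi j. \<tau> (q i) w ^ k)"

definition symx :: "(nat \<Rightarrow> nat \<Rightarrow> nat \<Rightarrow> real) \<Rightarrow> nat \<Rightarrow> nat \<Rightarrow> nat \<Rightarrow> real" where
  "symx x k i j = (if i \<le> j then x k i j else x k j i)"

text \<open>The (r+d) x (r+d) matrix Gamma_k of constraint (11), 1-based indices 1..r+d.\<close>
definition Gamma :: "('a \<Rightarrow> 'a \<Rightarrow> real) \<Rightarrow> (nat \<Rightarrow> nat \<Rightarrow> real) \<Rightarrow> (nat \<Rightarrow> 'a) \<Rightarrow> nat \<Rightarrow>
    (nat \<Rightarrow> nat \<Rightarrow> nat \<Rightarrow> real) \<Rightarrow> (nat \<Rightarrow> nat \<Rightarrow> nat \<Rightarrow> real) \<Rightarrow> nat \<Rightarrow> nat \<Rightarrow> nat \<Rightarrow> real" where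
  "Gamma \<tau> p q r xs y k i i' =
     (if i \<le> r \<and> i' \<le> r then Phi p k (\<tau> (q i) (q i'))
      else if i \<le> r then (\<Sum>l\<le>k. p k l * y l i (i' - r))
      else if i' \<le> r then (\<Sum>l\<le>k. p k l * y l i' (i - r))
      else (\<Sum>l\<le>k. p k l * xs l (i - r) (i' - r)))"

text \<open>The (d+1) x (d+1) matrix of constraint (17), indices 0..d.\<close>
definition Cmat :: "(nat \<Rightarrow> real) \<Rightarrow> (nat \<Rightarrow> nat \<Rightarrow> nat \<Rightarrow> real) \<Rightarrow> nat \<Rightarrow> nat \<Rightarrow> real" where
  "Cmat c xs i j = (if i = 0 \<and> j = 0 then 1 else if i = 0 then c j else if j = 0 then c i
                    else xs 0 i j)"

end

theory Submission
  imports Defs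
begin


lemma psd_gen:
  fixes K :: "'a \<Rightarrow> 'a \<Rightarrow> real" and pt :: "'b \<Rightarrow> 'a"
  assumes K: "\<And>N (xp :: nat \<Rightarrow> 'a). psd_on {1..N} (\<lambda>i j. K (xp i) (xp j))"
    and fin: "finite I"
  shows "0 \<le> (\<Sum>a\<in>I. \<Sum>b\<in>I. w a * K (pt a) (pt b) * w b)"
proof -
  obtain h where h: "bij_betw h {1..card I} I"
    using ex_bij_betw_nat_finite_1[OF fin] by blast
  have "0 \<le> (\<Sum>i\<in>{1..card I}. \<Sum>j\<in>{1..card I}. w (h i) * K (pt (h i)) (pt (h j)) * w (h j))"
    using K[of "card I" "pt \<circ> h"] unfolding psd_on_def comp_def
    apply (elim conjE) apply (erule allE[of _ "\<lambda>i. w (h i)"]) by simp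
  also have "\<dots> = (\<Sum>a\<in>I. \<Sum>b\<in>I. w a * K (pt a) (pt b) * w b)"
  proof -
    have i: "\<And>a. (\<Sum>j\<in>{1..card I}. w a * K (pt a) (pt (h j)) * w (h j)) = (\<Sum>b\<in>I. w a * K (pt a) (pt b) * w b)"
      by (rule sum.reindex_bij_betw[OF h])
    show ?thesis unfolding i by (rule sum.reindex_bij_betw[OF h])
  qed
  finally show ?thesis .
qed

lemma quad_block:
  fixes W :: "'b set" and f \<rho> :: "'b \<Rightarrow> real" and u :: "nat \<Rightarrow> real"
  assumes "finite W" "\<And>w. w \<in> W \<Longrightarrow> 0 \<le> \<rho> w"
  shows "0 \<le> (\<Sum>i<m. \<Sum>j<m. u i * (\<Sum>w\<in>W. \<rho> w * f w ^ (i + j)) * u j)"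
proof -
  have "(\<Sum>i<m. \<Sum>j<m. u i * (\<Sum>w\<in>W. \<rho> w * f w ^ (i + j)) * u j)
      = (\<Sum>w\<in>W. \<rho> w * (\<Sum>i<m. u i * f w ^ i)^2)"
  proof -
    have sq: "\<And>w. (\<Sum>i<m. u i * f w ^ i)^2 = (\<Sum>i<m. \<Sum>j<m. u i * f w ^ (i + j) * u j)"
      unfolding power2_eq_square sum_product 
      by (rule sum.cong[OF refl], rule sum.cong[OF refl]) (simp add: power_add mult_ac)
    have "(\<Sum>w\<in>W. \<rho> w * (\<Sum>i<m. u i * f w ^ i)^2) = (\<Sum>w\<in>W. \<Sum>i<m. \<Sum>j<m. u i * (\<rho> w * f w ^ (i + j)) * u j)"
      by (simp add: sq sum_distrib_left algebra_simps)
    also have "\<dots> = (\<Sum>i<m. \<Sum>w\<in>W. \<Sum>j<m. u i * (\<rho> w * f w ^ (i + j)) * u j)"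
      by (rule sum.swap)
    also have "\<dots> = (\<Sum>i<m. \<Sum>j<m. \<Sum>w\<in>W. u i * (\<rho> w * f w ^ (i + j)) * u j)"
      by (rule sum.cong[OF refl], rule sum.swap)
    also have "\<dots> = (\<Sum>i<m. \<Sum>j<m. u i * (\<Sum>w\<in>W. \<rho> w * f w ^ (i + j)) * u j)"
      by (simp add: sum_distrib_left sum_distrib_right)
    finally show ?thesis by simp
  qed
  also have "\<dots> \<ge> 0" using assms by (intro sum_nonneg) auto
  finally show ?thesis by simp
qed

lemma split3: fixes m :: nat shows "(\<Sum>i\<in>{0..<3*m}. h i) = (\<Sum>i<m. h i) + (\<Sum>i<m. h (m+i)) + (\<Sum>i<m. h (2*m+i))"
proof -
  have a: "{0..<3*m} = {0..<m} \<union> {m..<2*m} \<union> {2*m..<3*m}" by auto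
  have "(\<Sum>i\<in>{0..<3*m}. h i) = (\<Sum>i\<in>{0..<m}. h i) + (\<Sum>i\<in>{m..<2*m}. h i) + (\<Sum>i\<in>{2*m..<3*m}. h i)"
    unfolding a by (subst sum.union_disjoint, auto)+
  also have "(\<Sum>i\<in>{m..<2*m}. h i) = (\<Sum>i<m. h (m+i))"
    by (rule sum.reindex_bij_witness[of _ "\<lambda>i. m + i" "\<lambda>i. i - m"]) auto
  also have "(\<Sum>i\<in>{2*m..<3*m}. h i) = (\<Sum>i<m. h (2*m+i))"
    by (rule sum.reindex_bij_witness[of _ "\<lambda>i. 2*m + i" "\<lambda>i. i - 2*m"]) auto
  finally show ?thesis by (simp add: lessThan_atLeast0)
qed

lemma hankel_psd:
  fixes W :: "'b set" and f :: "'b \<Rightarrow> real"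
  assumes W: "finite W" and bd: "\<And>w. w \<in> W \<Longrightarrow> \<alpha> \<le> f w \<and> f w \<le> \<beta>"
  shows "H_psd m (\<lambda>k. \<Sum>w\<in>W. f w ^ k) \<alpha> \<beta>"
  unfolding H_psd_def psd_on_def
proof (intro conjI allI ballI)
  fix i j assume "i \<in> {0..<3*m}" "j \<in> {0..<3*m}"
  then show "Hmat m (\<lambda>k. \<Sum>w\<in>W. f w ^ k) \<alpha> \<beta> i j = Hmat m (\<lambda>k. \<Sum>w\<in>W. f w ^ k) \<alpha> \<beta> j i"
    by (simp add: Hmat_def add.commute)
next
  fix v :: "nat \<Rightarrow> real"
  let ?s = "\<lambda>k. \<Sum>w\<in>W. f w ^ k"
  let ?H = "Hmat m ?s \<alpha> \<beta>"
  have b0: "0 \<le> (\<Sum>i<m. \<Sum>j<m. v i * (\<Sum>w\<in>W. 1 * f w ^ (i + j)) * v j)"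
    by (rule quad_block) (use W in auto)
  have b1: "0 \<le> (\<Sum>i<m. \<Sum>j<m. v (m+i) * (\<Sum>w\<in>W. (f w - \<alpha>) * f w ^ (i + j)) * v (m+j))"
    by (rule quad_block) (use W bd in auto)
  have b2: "0 \<le> (\<Sum>i<m. \<Sum>j<m. v (2*m+i) * (\<Sum>w\<in>W. (\<beta> - f w) * f w ^ (i + j)) * v (2*m+j))"
    by (rule quad_block) (use W bd in auto)
  have e1: "\<And>k. ?s (Suc k) - \<alpha> * ?s k = (\<Sum>w\<in>W. (f w - \<alpha>) * f w ^ k)"
    by (simp add: sum_subtractf sum_distrib_left algebra_simps)
  have e2: "\<And>k. \<beta> * ?s k - ?s (Suc k) = (\<Sum>w\<in>W. (\<beta> - f w) * f w ^ k)"
    by (simp add: sum_subtractf sum_distrib_left algebra_simps)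
  have "(\<Sum>i\<in>{0..<3*m}. \<Sum>j\<in>{0..<3*m}. v i * ?H i j * v j)
     = (\<Sum>i<m. \<Sum>j<m. v i * (\<Sum>w\<in>W. 1 * f w ^ (i + j)) * v j)
     + (\<Sum>i<m. \<Sum>j<m. v (m+i) * (\<Sum>w\<in>W. (f w - \<alpha>) * f w ^ (i + j)) * v (m+j))
     + (\<Sum>i<m. \<Sum>j<m. v (2*m+i) * (\<Sum>w\<in>W. (\<beta> - f w) * f w ^ (i + j)) * v (2*m+j))"
    by (simp add: split3 sum.distrib Hmat_def e1[symmetric] e2[symmetric])
  then show "0 \<le> (\<Sum>i\<in>{0..<3*m}. \<Sum>j\<in>{0..<3*m}. v i * ?H i j * v j)"
    using b0 b1 b2 by linarith
qed



lemma code_x_sym: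
  assumes tau_sym: "\<And>x y. \<tau> x y = \<tau> y x"
  shows "code_x \<tau> Pi C k i j = code_x \<tau> Pi C k j i"
  unfolding code_x_def by (subst sum.swap) (simp add: tau_sym)

lemma symx_code_x:
  assumes tau_sym: "\<And>x y. \<tau> x y = \<tau> y x"
  shows "symx (code_x \<tau> Pi C) = code_x \<tau> Pi C"
  by (intro ext) (simp add: symx_def code_x_sym[OF tau_sym])

lemma sumRD: fixes r d :: nat and h :: "nat \<Rightarrow> real" shows "(\<Sum>i\<in>{1..r+d}. h i) = (\<Sum>i\<in>{1..r}. h i) + (\<Sum>j\<in>{1..d}. h (r+j))"
proof -
  have a: "{1..r+d} = {1..r} \<union> {r+1..r+d}" by auto
  have "(\<Sum>i\<in>{1..r+d}. h i) = (\<Sum>i\<in>{1..r}. h i) + (\<Sum>i\<in>{r+1..r+d}. h i)"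
    unfolding a by (subst sum.union_disjoint, auto)
  also have "(\<Sum>i\<in>{r+1..r+d}. h i) = (\<Sum>j\<in>{1..d}. h (r+j))"
    by (rule sum.reindex_bij_witness[of _ "\<lambda>j. r + j" "\<lambda>i. i - r"]) auto
  finally show ?thesis .
qed

lemma sumI:
  fixes F :: "nat + nat \<times> 'a \<Rightarrow> real"
  assumes "finite C"
  shows "(\<Sum>a\<in>Inl ` {1..r} \<union> Inr ` (SIGMA j:{1..d}. C \<inter> Pi j). F a)
     = (\<Sum>i\<in>{1..r}. F (Inl i)) + (\<Sum>j\<in>{1..d}. \<Sum>u\<in>C \<inter> Pi j. F (Inr (j, u)))"
proof -
  have f: "finite (SIGMA j:{1..d}. C \<inter> Pi j)" using assms by auto
  have "(\<Sum>a\<in>Inl ` {1..r} \<union> Inr ` (SIGMA j:{1..d}. C \<inter> Pi j). F a)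
      = (\<Sum>a\<in>Inl ` {1..r}. F a) + (\<Sum>a\<in>Inr ` (SIGMA j:{1..d}. C \<inter> Pi j). F a)"
    using f by (subst sum.union_disjoint) auto
  also have "\<dots> = (\<Sum>i\<in>{1..r}. F (Inl i)) + (\<Sum>z\<in>(SIGMA j:{1..d}. C \<inter> Pi j). F (Inr z))"
    by (simp add: sum.reindex)
  also have "(\<Sum>z\<in>(SIGMA j:{1..d}. C \<inter> Pi j). F (Inr z)) = (\<Sum>j\<in>{1..d}. \<Sum>u\<in>C \<inter> Pi j. F (Inr (j, u)))"
    using assms by (subst sum.Sigma) auto
  finally show ?thesis .
qed

lemma phi_sum1: "(\<Sum>l\<le>k. p k l * (\<Sum>w\<in>A. g w ^ l)) = (\<Sum>w\<in>A. Phi p k (g w))"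
  unfolding Phi_def by (simp add: sum_distrib_left) (rule sum.swap)

lemma phi_sum2: "(\<Sum>l\<le>k. p k l * (\<Sum>u\<in>A. \<Sum>w\<in>B. g u w ^ l)) = (\<Sum>u\<in>A. \<Sum>w\<in>B. Phi p k (g u w))"
proof -
  have "(\<Sum>l\<le>k. p k l * (\<Sum>u\<in>A. \<Sum>w\<in>B. g u w ^ l)) = (\<Sum>l\<le>k. \<Sum>u\<in>A. p k l * (\<Sum>w\<in>B. g u w ^ l))"
    by (simp add: sum_distrib_left)
  also have "\<dots> = (\<Sum>u\<in>A. \<Sum>l\<le>k. p k l * (\<Sum>w\<in>B. g u w ^ l))" by (rule sum.swap)
  also have "\<dots> = (\<Sum>u\<in>A. \<Sum>w\<in>B. Phi p k (g u w))" by (simp add: phi_sum1)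
  finally show ?thesis .
qed

lemma gamma_psd:
  fixes \<tau> :: "'a \<Rightarrow> 'a \<Rightarrow> real"
  assumes tau_sym: "\<And>x y. \<tau> x y = \<tau> y x"
    and K: "\<And>N (xp :: nat \<Rightarrow> 'a). psd_on {1..N} (\<lambda>i j. Phi p k (\<tau> (xp i) (xp j)))"
    and fin: "finite C"
  shows "psd_on {1..r+d} (Gamma \<tau> p q r (code_x \<tau> Pi C) (code_y \<tau> Pi q C) k)"
  unfolding psd_on_def
proof (intro conjI allI ballI)
  fix i j assume "i \<in> {1..r+d}" "j \<in> {1..r+d}"
  then show "Gamma \<tau> p q r (code_x \<tau> Pi C) (code_y \<tau> Pi q C) k i j = Gamma \<tau> p q r (code_x \<tau> Pi C) (code_y \<tau> Pi q C) k j i"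
    by (auto simp add: Gamma_def tau_sym code_x_sym[OF tau_sym])
next
  fix v :: "nat \<Rightarrow> real"
  let ?G = "Gamma \<tau> p q r (code_x \<tau> Pi C) (code_y \<tau> Pi q C) k"
  let ?P = "\<lambda>x y. Phi p k (\<tau> x y)"
  let ?I = "Inl ` {1..r} \<union> Inr ` (SIGMA j:{1..d}. C \<inter> Pi j)"
  define pt :: "nat + nat \<times> 'a \<Rightarrow> 'a" where "pt = case_sum q snd"
  define w :: "nat + nat \<times> 'a \<Rightarrow> real" where "w = case_sum v (\<lambda>z. v (r + fst z))"
  have fI: "finite ?I" using fin by auto
  have g11: "\<And>i i'. i \<in> {1..r} \<Longrightarrow> i' \<in> {1..r} \<Longrightarrow> ?G i i' = ?P (q i) (q i')"
    by (simp add: Gamma_def)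
  have g12: "\<And>i j. i \<in> {1..r} \<Longrightarrow> j \<in> {1..d} \<Longrightarrow> ?G i (r+j) = (\<Sum>u\<in>C \<inter> Pi j. ?P (q i) u)"
    by (simp add: Gamma_def code_y_def phi_sum1)
  have g21: "\<And>i j. i \<in> {1..r} \<Longrightarrow> j \<in> {1..d} \<Longrightarrow> ?G (r+j) i = (\<Sum>u\<in>C \<inter> Pi j. ?P u (q i))"
    by (simp add: Gamma_def code_y_def phi_sum1, simp add: tau_sym)
  have g22: "\<And>j j'. j \<in> {1..d} \<Longrightarrow> j' \<in> {1..d} \<Longrightarrow> ?G (r+j) (r+j') = (\<Sum>u\<in>C \<inter> Pi j. \<Sum>u'\<in>C \<inter> Pi j'. ?P u u')"
    by (simp add: Gamma_def code_x_def phi_sum2)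
  have L: "(\<Sum>i\<in>{1..r+d}. \<Sum>i'\<in>{1..r+d}. v i * ?G i i' * v i')
    = (\<Sum>i\<in>{1..r}. \<Sum>i'\<in>{1..r}. v i * ?G i i' * v i')
    + (\<Sum>i\<in>{1..r}. \<Sum>j\<in>{1..d}. v i * ?G i (r+j) * v (r+j))
    + (\<Sum>j\<in>{1..d}. \<Sum>i'\<in>{1..r}. v (r+j) * ?G (r+j) i' * v i')
    + (\<Sum>j\<in>{1..d}. \<Sum>j'\<in>{1..d}. v (r+j) * ?G (r+j) (r+j') * v (r+j'))"
    by (simp only: sumRD sum.distrib add.assoc)
  have R: "(\<Sum>a\<in>?I. \<Sum>b\<in>?I. w a * ?P (pt a) (pt b) * w b)
    = (\<Sum>i\<in>{1..r}. \<Sum>i'\<in>{1..r}. v i * ?P (q i) (q i') * v i')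
    + (\<Sum>i\<in>{1..r}. \<Sum>j\<in>{1..d}. \<Sum>u\<in>C \<inter> Pi j. v i * ?P (q i) u * v (r+j))
    + (\<Sum>j\<in>{1..d}. \<Sum>u\<in>C \<inter> Pi j. \<Sum>i'\<in>{1..r}. v (r+j) * ?P u (q i') * v i')
    + (\<Sum>j\<in>{1..d}. \<Sum>u\<in>C \<inter> Pi j. \<Sum>j'\<in>{1..d}. \<Sum>u'\<in>C \<inter> Pi j'. v (r+j) * ?P u u' * v (r+j'))"
    by (simp only: sumI[OF fin] sum.distrib add.assoc) (simp add: pt_def w_def)
  have e2: "(\<Sum>i\<in>{1..r}. \<Sum>j\<in>{1..d}. v i * ?G i (r+j) * v (r+j))
      = (\<Sum>i\<in>{1..r}. \<Sum>j\<in>{1..d}. \<Sum>u\<in>C \<inter> Pi j. v i * ?P (q i) u * v (r+j))"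
    by (simp add: g12 sum_distrib_left sum_distrib_right)
  have e3: "(\<Sum>j\<in>{1..d}. \<Sum>i'\<in>{1..r}. v (r+j) * ?G (r+j) i' * v i')
      = (\<Sum>j\<in>{1..d}. \<Sum>u\<in>C \<inter> Pi j. \<Sum>i'\<in>{1..r}. v (r+j) * ?P u (q i') * v i')"
    by (simp add: g21 sum_distrib_left sum_distrib_right) (rule sum.cong[OF refl], rule sum.swap)
  have e4: "(\<Sum>j\<in>{1..d}. \<Sum>j'\<in>{1..d}. v (r+j) * ?G (r+j) (r+j') * v (r+j'))
      = (\<Sum>j\<in>{1..d}. \<Sum>u\<in>C \<inter> Pi j. \<Sum>j'\<in>{1..d}. \<Sum>u'\<in>C \<inter> Pi j'. v (r+j) * ?P u u' * v (r+j'))"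
    by (simp add: g22 sum_distrib_left sum_distrib_right) (rule sum.cong[OF refl], rule sum.swap)
  have e1: "(\<Sum>i\<in>{1..r}. \<Sum>i'\<in>{1..r}. v i * ?G i i' * v i') = (\<Sum>i\<in>{1..r}. \<Sum>i'\<in>{1..r}. v i * ?P (q i) (q i') * v i')"
    by (simp add: g11)
  have "0 \<le> (\<Sum>a\<in>?I. \<Sum>b\<in>?I. w a * ?P (pt a) (pt b) * w b)"
    by (rule psd_gen[OF K fI])
  then show "0 \<le> (\<Sum>i\<in>{1..r+d}. \<Sum>i'\<in>{1..r+d}. v i * ?G i i' * v i')"
    unfolding L R e1 e2 e3 e4 .
qed



theorem theorem7p3:
  fixes \<tau> :: "'a \<Rightarrow> 'a \<Rightarrow> real" and \<tau>0 :: real and p :: "nat \<Rightarrow> nat \<Rightarrow> real"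
    and a b :: real and m r d :: nat and q :: "nat \<Rightarrow> 'a"
    and P :: "'a set" and Pi :: "nat \<Rightarrow> 'a set"
    and \<alpha> \<beta> aa bb :: "nat \<Rightarrow> nat \<Rightarrow> real"
    and Acon :: "(nat \<Rightarrow> nat \<Rightarrow> nat \<Rightarrow> real) \<Rightarrow> (nat \<Rightarrow> nat \<Rightarrow> nat \<Rightarrow> real) \<Rightarrow> bool"
    and S :: "real set"
  assumes tau_sym: "\<And>x y. \<tau> x y = \<tau> y x"
    and tau_diag: "\<And>x. \<tau> x x = \<tau>0"
    and Phi_deg: "\<And>k. p k k \<noteq> 0"
    and Phi_one: "\<And>k. Phi p k \<tau>0 = 1"
    and Phi_psd: "\<And>k N (xp :: nat \<Rightarrow> 'a).
                    psd_on {1..N} (\<lambda>i j. Phi p k (\<tau> (xp i) (xp j)))"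
    and ab: "a < b" and tau0_out: "\<tau>0 \<notin> {a..b}"
    and S_def: "S = range (\<lambda>(x, y). \<tau> x y) \<inter> {a..b}"
    and m_pos: "1 \<le> m"
    and Pi_disj: "\<And>i j. i \<in> {1..d} \<Longrightarrow> j \<in> {1..d} \<Longrightarrow> i \<noteq> j \<Longrightarrow> Pi i \<inter> Pi j = {}"
    and P_sub: "P \<subseteq> (\<Union>j\<in>{1..d}. Pi j)"
    and \<alpha>\<beta>: "\<And>i j. i \<in> {1..r} \<Longrightarrow> j \<in> {1..d} \<Longrightarrow> \<alpha> i j \<le> \<beta> i j"
    and \<alpha>\<beta>_bd: "\<And>i j w. i \<in> {1..r} \<Longrightarrow> j \<in> {1..d} \<Longrightarrow> w \<in> Pi j \<Longrightarrow>
                   \<alpha> i j \<le> \<tau> (q i) w \<and> \<tau> (q i) w \<le> \<beta> i j"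
    and ab_le: "\<And>i j. 1 \<le> i \<Longrightarrow> i \<le> j \<Longrightarrow> j \<le> d \<Longrightarrow> aa i j \<le> bb i j"
    and ab_bd: "\<And>i j u v. 1 \<le> i \<Longrightarrow> i \<le> j \<Longrightarrow> j \<le> d \<Longrightarrow> u \<in> Pi i \<Longrightarrow> v \<in> Pi j \<Longrightarrow>
                   u \<noteq> v \<Longrightarrow> \<tau> u v \<in> {a..b} \<Longrightarrow> \<tau> u v \<in> {aa i j..bb i j}"
    and Acon_codes: "\<And>C. is_Scode \<tau> S C \<Longrightarrow> C \<subseteq> P \<Longrightarrow>
                        Acon (code_x \<tau> Pi C) (code_y \<tau> Pi q C)"
  shows "A_code \<tau> P S \<le> Sup {ereal (\<Sum>j\<in>{1..d}. c j) | c x y.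
     (\<forall>k<2*m. psd_on {1..r+d} (Gamma \<tau> p q r (symx x) y k)) \<and>
     (\<forall>i\<in>{1..r}. \<forall>j\<in>{1..d}. H_psd m (\<lambda>k. y k i j) (\<alpha> i j) (\<beta> i j)) \<and>
     (\<forall>i j. 1 \<le> i \<and> i < j \<and> j \<le> d \<longrightarrow> H_psd m (\<lambda>k. x k i j) (aa i j) (bb i j)) \<and>
     (\<forall>i\<in>{1..d}. H_psd m (\<lambda>k. x k i i - c i * \<tau>0 ^ k) (aa i i) (bb i i)) \<and>
     Acon (symx x) y \<and>
     (\<forall>i\<in>{1..r}. \<forall>j\<in>{1..d}. y 0 i j = c j) \<and> (\<forall>j\<in>{1..d}. 0 \<le> c j) \<and>
     psd_on {0..d} (Cmat c (symx x))}"
proof -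
  let ?R = "{ereal (\<Sum>j\<in>{1..d}. c j) | c x y.
     (\<forall>k<2*m. psd_on {1..r+d} (Gamma \<tau> p q r (symx x) y k)) \<and>
     (\<forall>i\<in>{1..r}. \<forall>j\<in>{1..d}. H_psd m (\<lambda>k. y k i j) (\<alpha> i j) (\<beta> i j)) \<and>
     (\<forall>i j. 1 \<le> i \<and> i < j \<and> j \<le> d \<longrightarrow> H_psd m (\<lambda>k. x k i j) (aa i j) (bb i j)) \<and>
     (\<forall>i\<in>{1..d}. H_psd m (\<lambda>k. x k i i - c i * \<tau>0 ^ k) (aa i i) (bb i i)) \<and>
     Acon (symx x) y \<and>
     (\<forall>i\<in>{1..r}. \<forall>j\<in>{1..d}. y 0 i j = c j) \<and> (\<forall>j\<in>{1..d}. 0 \<le> c j) \<and>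
     psd_on {0..d} (Cmat c (symx x))}"
  have S_ab: "S \<subseteq> {a..b}" using S_def by auto
  have main: "ereal (real (card C)) \<in> ?R" if C: "is_Scode \<tau> S C" "C \<subseteq> P" for C
  proof -
    have finC: "finite C" using C unfolding is_Scode_def by auto
    have inS: "\<And>u v. u \<in> C \<Longrightarrow> v \<in> C \<Longrightarrow> u \<noteq> v \<Longrightarrow> \<tau> u v \<in> {a..b}"
      using C S_ab unfolding is_Scode_def by blast
    define c where "c = (\<lambda>j. real (card (C \<inter> Pi j)))"
    define x where "x = code_x \<tau> Pi C"
    define y where "y = code_y \<tau> Pi q C"
    have sx: "symx x = x" unfolding x_def by (rule symx_code_x[OF tau_sym])
    have card_eq: "real (card C) = (\<Sum>j\<in>{1..d}. c j)"
    proof -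
      have "C = (\<Union>j\<in>{1..d}. C \<inter> Pi j)" using C(2) P_sub by auto
      then have "card C = card (\<Union>j\<in>{1..d}. C \<inter> Pi j)" by simp
      also have "\<dots> = (\<Sum>j\<in>{1..d}. card (C \<inter> Pi j))"
        using finC Pi_disj by (subst card_UN_disjoint) (auto, blast)
      finally show ?thesis unfolding c_def by simp
    qed
    have c1: "\<forall>k<2*m. psd_on {1..r+d} (Gamma \<tau> p q r (symx x) y k)"
      unfolding sx unfolding x_def y_def using gamma_psd[of \<tau> p _ C r d q Pi, OF tau_sym Phi_psd finC] by blast
    have c2: "\<forall>i\<in>{1..r}. \<forall>j\<in>{1..d}. H_psd m (\<lambda>k. y k i j) (\<alpha> i j) (\<beta> i j)"
    proof (intro ballI)
      fix i j assume ij: "i \<in> {1..r}" "j \<in> {1..d}"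
      have "H_psd m (\<lambda>k. \<Sum>w\<in>C \<inter> Pi j. \<tau> (q i) w ^ k) (\<alpha> i j) (\<beta> i j)"
        by (rule hankel_psd) (use finC \<alpha>\<beta>_bd[OF ij] in auto)
      then show "H_psd m (\<lambda>k. y k i j) (\<alpha> i j) (\<beta> i j)"
        unfolding y_def code_y_def .
    qed
    have c3: "\<forall>i j. 1 \<le> i \<and> i < j \<and> j \<le> d \<longrightarrow> H_psd m (\<lambda>k. x k i j) (aa i j) (bb i j)"
    proof (intro allI impI)
      fix i j assume ij: "1 \<le> i \<and> i < j \<and> j \<le> d"
      have xe: "x k i j = (\<Sum>z\<in>(C \<inter> Pi i) \<times> (C \<inter> Pi j). (case_prod \<tau> z) ^ k)" for k
        unfolding x_def code_x_def by (simp add: sum.cartesian_product split_def)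
      have "H_psd m (\<lambda>k. \<Sum>z\<in>(C \<inter> Pi i) \<times> (C \<inter> Pi j). (case_prod \<tau> z) ^ k) (aa i j) (bb i j)"
      proof (rule hankel_psd)
        show "finite ((C \<inter> Pi i) \<times> (C \<inter> Pi j))" using finC by auto
      next
        fix z assume z: "z \<in> (C \<inter> Pi i) \<times> (C \<inter> Pi j)"
        then obtain u v where uv: "z = (u, v)" "u \<in> C" "u \<in> Pi i" "v \<in> C" "v \<in> Pi j" by auto
        have "u \<noteq> v" using uv Pi_disj[of i j] ij by auto
        then have "\<tau> u v \<in> {aa i j..bb i j}"
          using ab_bd[of i j u v] ij uv inS by auto
        then show "aa i j \<le> case_prod \<tau> z \<and> case_prod \<tau> z \<le> bb i j" using uv by auto
      qed
      then show "H_psd m (\<lambda>k. x k i j) (aa i j) (bb i j)" unfolding xe .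
    qed
    have c4: "\<forall>i\<in>{1..d}. H_psd m (\<lambda>k. x k i i - c i * \<tau>0 ^ k) (aa i i) (bb i i)"
    proof
      fix i assume i: "i \<in> {1..d}"
      define W where "W = {z \<in> (C \<inter> Pi i) \<times> (C \<inter> Pi i). fst z \<noteq> snd z}"
      define D where "D = (\<lambda>u. (u, u)) ` (C \<inter> Pi i)"
      have WD: "(C \<inter> Pi i) \<times> (C \<inter> Pi i) = W \<union> D" "W \<inter> D = {}" unfolding W_def D_def by auto
      have fW: "finite W" "finite D" unfolding W_def D_def using finC by auto
      have xe: "x k i i - c i * \<tau>0 ^ k = (\<Sum>z\<in>W. (case_prod \<tau> z) ^ k)" for k
      proof -
        have "x k i i = (\<Sum>z\<in>(C \<inter> Pi i) \<times> (C \<inter> Pi i). (case_prod \<tau> z) ^ k)"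
          unfolding x_def code_x_def by (simp add: sum.cartesian_product split_def)
        also have "\<dots> = (\<Sum>z\<in>W. (case_prod \<tau> z) ^ k) + (\<Sum>z\<in>D. (case_prod \<tau> z) ^ k)"
          unfolding WD(1) using fW WD(2) by (rule sum.union_disjoint)
        also have "(\<Sum>z\<in>D. (case_prod \<tau> z) ^ k) = (\<Sum>u\<in>C \<inter> Pi i. \<tau> u u ^ k)"
          unfolding D_def by (subst sum.reindex) (auto simp: inj_on_def)
        also have "\<dots> = c i * \<tau>0 ^ k" by (simp add: tau_diag c_def)
        finally show ?thesis by simp
      qed
      have "H_psd m (\<lambda>k. \<Sum>z\<in>W. (case_prod \<tau> z) ^ k) (aa i i) (bb i i)"
      proof (rule hankel_psd)
        show "finite W" by (rule fW)
      next
        fix z assume z: "z \<in> W"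
        then obtain u v where uv: "z = (u, v)" "u \<in> C" "u \<in> Pi i" "v \<in> C" "v \<in> Pi i" "u \<noteq> v"
          unfolding W_def by auto
        then have "\<tau> u v \<in> {aa i i..bb i i}"
          using ab_bd[of i i u v] i inS by auto
        then show "aa i i \<le> case_prod \<tau> z \<and> case_prod \<tau> z \<le> bb i i" using uv by auto
      qed
      then show "H_psd m (\<lambda>k. x k i i - c i * \<tau>0 ^ k) (aa i i) (bb i i)" unfolding xe .
    qed
    have c5: "Acon (symx x) y" unfolding sx unfolding x_def y_def by (rule Acon_codes[OF C])
    have c6: "\<forall>i\<in>{1..r}. \<forall>j\<in>{1..d}. y 0 i j = c j" by (simp add: y_def code_y_def c_def)
    have c7: "\<forall>j\<in>{1..d}. 0 \<le> c j" by (simp add: c_def)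
    have x0: "x 0 i j = c i * c j" for i j by (simp add: x_def code_x_def c_def)
    have c8: "psd_on {0..d} (Cmat c (symx x))"
      unfolding psd_on_def sx
    proof (intro conjI allI ballI)
      fix i j show "Cmat c x i j = Cmat c x j i" by (simp add: Cmat_def x0)
    next
      fix v :: "nat \<Rightarrow> real"
      have z: "{0..d} = insert 0 {1..d}" by auto
      have "(\<Sum>i\<in>{0..d}. \<Sum>j\<in>{0..d}. v i * Cmat c x i j * v j)
          = v 0 * v 0 + (\<Sum>j\<in>{1..d}. v 0 * c j * v j) + ((\<Sum>i\<in>{1..d}. v i * c i * v 0) + (\<Sum>i\<in>{1..d}. \<Sum>j\<in>{1..d}. v i * (c i * c j) * v j))"
        unfolding z by (simp add: Cmat_def x0 sum.distrib)
      also have "\<dots> = (v 0 + (\<Sum>j\<in>{1..d}. c j * v j))^2"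
        by (simp add: power2_eq_square algebra_simps sum_distrib_left sum_distrib_right sum_product)
      finally show "0 \<le> (\<Sum>i\<in>{0..d}. \<Sum>j\<in>{0..d}. v i * Cmat c x i j * v j)" by simp
    qed
    show ?thesis unfolding card_eq using c1 c2 c3 c4 c5 c6 c7 c8 by blast
  qed
  show ?thesis unfolding A_code_def
    by (rule Sup_least) (use main in \<open>auto intro: Sup_upper\<close>)
qed

end
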